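(* For every $U\in\mathcal U_n$, the word $q(U)$ produced by the algorithm below is the area sequence of a Dyck path of length $n$, i.e. $q(U)=(a_1,\dots,a_n)$ with $a_1=0$ and $a_i\le a_{i-1}+1$ for $2\le i\le n$.
   Context: A unit interval order on $\{1,\dots,n\}$ is a relation $\prec$ such that there are closed intervals $I_1,\dots,I_n$ of length $1$ in $\mathbb R$, numbered from left to right, with $i\prec j$ iff $I_i$ lies strictly to the left of $I_j$; $\mathcal U_n$ is the set of these. Levels: set $\ell(1)=0$ and, for $j\ge 2$, $\ell(j)=\max_{i\prec j}\ell(i)+1$, with $\ell(j)=0$ if no $i\prec j$. Algorithm: define words $q_1,\dots,q_n$, $q_i$ of length $i$, with $q_1=(0)$. Given $q_{i-1}$, let $C_i$ be the number of elements $k$ with $k\prec i$ and $\ell(k)=\ell(i)-1$. Then $q_i$ is obtained from $q_{i-1}$ by inserting a letter $\ell(i)$ directly after the (possibly empty) run of letters $\ell(i)$ that immediately follows the $C_i$-th occurrence of the letter $\ell(i)-1$ in $q_{i-1}$ (when $C_i=0$, the "0-th occurrence" is understood as the start of the word). Set $q(U)=q_n$. The area sequence of a Dyck path lists, row by row from bottom to top, the number of full unit boxes between the path and the diagonal; these are exactly the sequences described in the claim. *)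

theory Defs
  imports Complex_Main
begin

text \<open>A relation prec on {1..n} is a unit interval order if there are unit intervals
  [x i, x i + 1], numbered from left to right (non-decreasing left endpoints),
  with i prec j iff interval i lies strictly to the left of interval j.\<close>
definition unit_interval_order :: "nat \<Rightarrow> (nat \<Rightarrow> nat \<Rightarrow> bool) \<Rightarrow> bool" where
  "unit_interval_order n prec \<longleftrightarrow>
     (\<exists>x :: nat \<Rightarrow> real.
        (\<forall>i j. 1 \<le> i \<longrightarrow> i \<le> j \<longrightarrow> j \<le> n \<longrightarrow> x i \<le> x j) \<and>
        (\<forall>i j. prec i j \<longleftrightarrow> (i \<in> {1..n} \<and> j \<in> {1..n} \<and> x i + 1 < x j)))"

text \<open>Levels. In a unit interval order numbered left to right, i prec j implies i < j,
  so we only look at predecessors i < j (this makes the recursion well-founded).\<close>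
function lev :: "(nat \<Rightarrow> nat \<Rightarrow> bool) \<Rightarrow> nat \<Rightarrow> nat" where
  "lev prec j =
     (if \<exists>i\<in>{1..<j}. prec i j
      then Max ((\<lambda>i. Suc (lev prec i)) ` {i \<in> {1..<j}. prec i j})
      else 0)"
  by auto
termination by (relation "measure (\<lambda>(p, j). j)") auto


definition Ccount :: "nat \<Rightarrow> (nat \<Rightarrow> nat \<Rightarrow> bool) \<Rightarrow> nat \<Rightarrow> nat" where
  "Ccount n prec i =
     (if lev prec i = 0 then 0
      else card {k \<in> {1..n}. prec k i \<and> lev prec k = lev prec i - 1})"

text \<open>0-based index of the c-th occurrence (c \<ge> 1) of letter a in xs.\<close>
definition occ_index :: "nat list \<Rightarrow> nat \<Rightarrow> nat \<Rightarrow> nat" where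
  "occ_index xs a c =
     (LEAST m. m < length xs \<and> xs ! m = a \<and> length (filter (\<lambda>y. y = a) (take m xs)) = c - 1)"

text \<open>Insert letter L directly after the run of letters L that immediately follows the
  c-th occurrence of L - 1 (c = 0: the start of the word).\<close>
definition insert_step :: "nat list \<Rightarrow> nat \<Rightarrow> nat \<Rightarrow> nat list" where
  "insert_step xs L c =
     (let p = (if c = 0 then 0 else Suc (occ_index xs (L - 1) c));
          p' = p + length (takeWhile (\<lambda>y. y = L) (drop p xs))
      in take p' xs @ [L] @ drop p' xs)"

text \<open>The words q_1, ..., q_n (qword n prec i = q_i; q_0 is a dummy).\<close>
fun qword :: "nat \<Rightarrow> (nat \<Rightarrow> nat \<Rightarrow> bool) \<Rightarrow> nat \<Rightarrow> nat list" where
  "qword n prec 0 = []"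
| "qword n prec (Suc 0) = [0]"
| "qword n prec (Suc (Suc i)) =
     insert_step (qword n prec (Suc i)) (lev prec (Suc (Suc i))) (Ccount n prec (Suc (Suc i)))"

definition q_of :: "nat \<Rightarrow> (nat \<Rightarrow> nat \<Rightarrow> bool) \<Rightarrow> nat list" where
  "q_of n prec = qword n prec n"

end

theory Submission imports Defs "HOL-Library.Multiset" begin

definition dyck :: "nat list \<Rightarrow> bool" where
 "dyck xs \<longleftrightarrow> xs \<noteq> [] \<and> xs ! 0 = 0 \<and> (\<forall>i. 1 \<le> i \<and> i < length xs \<longrightarrow> xs ! i \<le> xs ! (i - 1) + 1)"

lemma ins_at:
  assumes d: "dyck xs" and le: "p \<le> length xs" and a: "p = 0 \<Longrightarrow> L = 0"
    and b: "0 < p \<Longrightarrow> L \<le> xs ! (p - 1) + 1" and c: "p < length xs \<Longrightarrow> xs ! p \<le> L + 1"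
  shows "dyck (take p xs @ [L] @ drop p xs)"
proof -
  let ?r = "take p xs @ [L] @ drop p xs"
  have len: "length ?r = Suc (length xs)" using le by simp
  have r1: "j < p \<Longrightarrow> ?r ! j = xs ! j" for j using le by (simp add: nth_append)
  have r2: "?r ! p = L" using le by (simp add: nth_append)
  have r3: "p < j \<Longrightarrow> j \<le> length xs \<Longrightarrow> ?r ! j = xs ! (j - 1)" for j using le
    by (simp add: nth_append min_def)
  have x0: "xs \<noteq> []" "xs ! 0 = 0" and xs: "\<And>i. 1 \<le> i \<Longrightarrow> i < length xs \<Longrightarrow> xs ! i \<le> xs ! (i - 1) + 1"
    using d unfolding dyck_def by auto
  have "?r ! 0 = 0"
    using r1[of 0] r2 a x0 by (cases "p = 0") auto
  moreover have "?r ! i \<le> ?r ! (i - 1) + 1" if "1 \<le> i" "i < length ?r" for i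
  proof -
    consider "i < p" | "i = p" | "i = Suc p" | "Suc p < i" by linarith
    then show ?thesis
    proof cases
      case 1
      have "?r ! i = xs ! i" "?r ! (i - 1) = xs ! (i - 1)" using r1 1 by auto
      moreover have "xs ! i \<le> xs ! (i - 1) + 1" using xs[of i] 1 le that by linarith
      ultimately show ?thesis by simp
    next
      case 2
      have "?r ! i = L" "?r ! (i - 1) = xs ! (i - 1)" using r1 r2 2 that by auto
      then show ?thesis using b 2 that by simp
    next
      case 3
      have "?r ! i = xs ! p" "?r ! (i - 1) = L" "p < length xs" using r2 r3[of i] 3 that len by auto
      then show ?thesis using c by simp
    next
      case 4
      have "?r ! i = xs ! (i - 1)" "?r ! (i - 1) = xs ! (i - 1 - 1)" using r3 4 that len by auto
      moreover have "xs ! (i - 1) \<le> xs ! (i - 1 - 1) + 1" using xs[of "i - 1"] 4 that len by simp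
      ultimately show ?thesis by simp
    qed
  qed
  ultimately show ?thesis unfolding dyck_def by auto
qed

lemma occ_exists:
  assumes "1 \<le> c" "c \<le> count (mset xs) a"
  shows "\<exists>m. m < length xs \<and> xs ! m = a \<and> length (filter (\<lambda>y. y = a) (take m xs)) = c - 1"
  using assms
proof (induction xs arbitrary: c)
  case Nil then show ?case by simp
next
  case (Cons y ys)
  show ?case
  proof (cases "y = a")
    case True
    show ?thesis
    proof (cases "c = 1")
      case True then show ?thesis using \<open>y = a\<close> by (intro exI[of _ 0]) auto
    next
      case False
      have "1 \<le> c - 1" "c - 1 \<le> count (mset ys) a" using False Cons.prems True by auto
      from Cons.IH[OF this] obtain m where "m < length ys \<and> ys ! m = a \<and> length (filter (\<lambda>y. y = a) (take m ys)) = c - 1 - 1"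
        by blast
      then show ?thesis using True False Cons.prems by (intro exI[of _ "Suc m"]) auto
    qed
  next
    case False
    then obtain m where "m < length ys \<and> ys ! m = a \<and> length (filter (\<lambda>y. y = a) (take m ys)) = c - 1"
      using Cons.IH[of c] Cons.prems by auto
    then show ?thesis using False by (intro exI[of _ "Suc m"]) auto
  qed
qed

lemma ins_dyck:
  assumes d: "dyck xs" and h: "(L = 0 \<and> c = 0) \<or> (0 < L \<and> 1 \<le> c \<and> c \<le> count (mset xs) (L - 1))"
  shows "dyck (insert_step xs L c) \<and> mset (insert_step xs L c) = mset xs + {#L#}"
proof -
  define p where "p = (if c = 0 then 0 else Suc (occ_index xs (L - 1) c))"
  define t where "t = length (takeWhile (\<lambda>y. y = L) (drop p xs))"
  have eq: "insert_step xs L c = take (p + t) xs @ [L] @ drop (p + t) xs"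
    unfolding insert_step_def p_def t_def Let_def by simp
  have pm: "p = 0 \<and> L = 0 \<or> (\<exists>m. p = Suc m \<and> m < length xs \<and> xs ! m = L - 1 \<and> 0 < L)"
  proof (cases "c = 0")
    case True then show ?thesis using h p_def by auto
  next
    case False
    then have hh: "0 < L" "1 \<le> c" "c \<le> count (mset xs) (L - 1)" using h by auto
    from occ_exists[OF hh(2,3)] have "\<exists>m. m < length xs \<and> xs ! m = L - 1 \<and> length (filter (\<lambda>y. y = L - 1) (take m xs)) = c - 1" .
    then have "occ_index xs (L - 1) c < length xs \<and> xs ! occ_index xs (L - 1) c = L - 1"
      unfolding occ_index_def by (rule LeastI2_ex) auto
    then show ?thesis using False hh p_def by auto
  qed
  have pl: "p \<le> length xs" using pm by auto
  have tl: "p + t \<le> length xs" unfolding t_def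
    using length_takeWhile_le[of "\<lambda>y. y = L" "drop p xs"] pl by simp
  have tL: "0 < t \<Longrightarrow> xs ! (p + t - 1) = L"
  proof -
    assume "0 < t"
    then have "takeWhile (\<lambda>y. y = L) (drop p xs) ! (t - 1) = drop p xs ! (t - 1)"
      unfolding t_def by (intro takeWhile_nth) simp
    moreover have "takeWhile (\<lambda>y. y = L) (drop p xs) ! (t - 1) = L"
      using \<open>0 < t\<close> unfolding t_def
      by (metis (mono_tags) diff_less less_numeral_extra(1) nth_mem set_takeWhileD)
    ultimately show ?thesis using pl \<open>0 < t\<close> tl by (simp add: add.commute add_diff_assoc)
  qed
  have x0: "xs ! 0 = 0" and xs: "\<And>i. 1 \<le> i \<Longrightarrow> i < length xs \<Longrightarrow> xs ! i \<le> xs ! (i - 1) + 1"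
    using d unfolding dyck_def by auto
  have "dyck (take (p + t) xs @ [L] @ drop (p + t) xs)"
  proof (rule ins_at[OF d tl])
    show "p + t = 0 \<Longrightarrow> L = 0" using pm by auto
    show "L \<le> xs ! (p + t - 1) + 1" if "0 < p + t"
    proof (cases "t = 0")
      case True then show ?thesis using pm that by auto
    next
      case False then show ?thesis using tL by simp
    qed
    show "xs ! (p + t) \<le> L + 1" if "p + t < length xs"
    proof (cases "t = 0")
      case True
      then show ?thesis using pm that x0 xs[of p] by auto
    next
      case False then show ?thesis using tL xs[of "p + t"] that by simp
    qed
  qed
  moreover have "mset (take (p + t) xs @ [L] @ drop (p + t) xs) = mset xs + {#L#}"
  proof -
    have "mset xs = mset (take (p + t) xs) + mset (drop (p + t) xs)"
      by (metis append_take_drop_id mset_append)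
    then show ?thesis by simp
  qed
  ultimately show ?thesis using eq by simp
qed

declare lev.simps[simp del]

lemma prec_lt:
  assumes "unit_interval_order n prec" "prec k i"
  shows "k < i \<and> 1 \<le> k \<and> i \<le> n"
proof -
  obtain x :: "nat \<Rightarrow> real" where m: "\<forall>i j. 1 \<le> i \<longrightarrow> i \<le> j \<longrightarrow> j \<le> n \<longrightarrow> x i \<le> x j"
    and p: "\<forall>i j. prec i j \<longleftrightarrow> (i \<in> {1..n} \<and> j \<in> {1..n} \<and> x i + 1 < x j)"
    using assms(1) unfolding unit_interval_order_def by blast
  have k: "k \<in> {1..n}" "i \<in> {1..n}" "x k + 1 < x i" using p assms(2) by auto
  show ?thesis
  proof (rule ccontr)
    assume "\<not> ?thesis"
    then have "i \<le> k" using k by auto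
    then have "x i \<le> x k" using m k by auto
    then show False using k by linarith
  qed
qed

lemma lev_pos:
  assumes "0 < lev prec i"
  shows "\<exists>k\<in>{1..<i}. prec k i \<and> lev prec k = lev prec i - 1"
proof -
  have e: "lev prec i = (if \<exists>k\<in>{1..<i}. prec k i
      then Max ((\<lambda>k. Suc (lev prec k)) ` {k \<in> {1..<i}. prec k i}) else 0)"
    by (rule lev.simps)
  have ex: "\<exists>k\<in>{1..<i}. prec k i"
  proof (rule ccontr)
    assume "\<not> (\<exists>k\<in>{1..<i}. prec k i)"
    then have "lev prec i = 0" using e by simp
    then show False using assms by simp
  qed
  then have "lev prec i = Max ((\<lambda>k. Suc (lev prec k)) ` {k \<in> {1..<i}. prec k i})" using e by simp
  moreover have "Max ((\<lambda>k. Suc (lev prec k)) ` {k \<in> {1..<i}. prec k i}) \<in> (\<lambda>k. Suc (lev prec k)) ` {k \<in> {1..<i}. prec k i}"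
    using ex by (intro Max_in) auto
  ultimately obtain k where "k \<in> {k \<in> {1..<i}. prec k i}" "lev prec i = Suc (lev prec k)" by auto
  then show ?thesis by auto
qed


lemma Ccount_pos:
  assumes "unit_interval_order n prec" "0 < lev prec i"
  shows "1 \<le> Ccount n prec i"
proof -
  obtain k where k: "k \<in> {1..<i}" "prec k i" "lev prec k = lev prec i - 1" using lev_pos[OF assms(2)] by blast
  define S where "S = {k \<in> {1..n}. prec k i \<and> lev prec k = lev prec i - 1}"
  have "k \<in> S" using k prec_lt[OF assms(1) k(2)] unfolding S_def by auto
  moreover have "finite S" unfolding S_def by simp
  ultimately have "card S \<noteq> 0" by (metis card_0_eq empty_iff)
  then have "card {k \<in> {1..n}. prec k i \<and> lev prec k = lev prec i - 1} \<noteq> 0" unfolding S_def .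
  moreover have "Ccount n prec i = card {k \<in> {1..n}. prec k i \<and> lev prec k = lev prec i - 1}"
    unfolding Ccount_def using assms(2) by simp
  ultimately show ?thesis by linarith
qed

lemma Ccount_le:
  assumes "unit_interval_order n prec"
  shows "Ccount n prec i \<le> card {k \<in> {1..<i}. lev prec k = lev prec i - 1}"
proof -
  have "{k \<in> {1..n}. prec k i \<and> lev prec k = lev prec i - 1} \<subseteq> {k \<in> {1..<i}. lev prec k = lev prec i - 1}"
    using prec_lt[OF assms] by auto
  then have "card {k \<in> {1..n}. prec k i \<and> lev prec k = lev prec i - 1} \<le> card {k \<in> {1..<i}. lev prec k = lev prec i - 1}"
    by (intro card_mono) auto
  then show ?thesis unfolding Ccount_def by simp
qed

lemma cm: "count (mset (map f l)) a = length (filter (\<lambda>k. f k = a) l)"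
  by (induction l) auto

lemma count_map: "count (mset (map f [1..<i])) a = card {k \<in> {1..<i}. f k = a}"
proof -
  have "count (mset (map f [1..<i])) a = length (filter (\<lambda>k. f k = a) [1..<i])"
    by (rule cm)
  also have "\<dots> = card ({k. f k = a} \<inter> set [1..<i])" by (rule distinct_length_filter) simp
  also have "\<dots> = card {k \<in> {1..<i}. f k = a}" by (rule arg_cong[where f = card]) auto
  finally show ?thesis .
qed

lemma inv:
  assumes "unit_interval_order n prec"
  shows "Suc j \<le> n \<Longrightarrow> dyck (qword n prec (Suc j)) \<and> mset (qword n prec (Suc j)) = mset (map (lev prec) [1..<Suc (Suc j)])"
proof (induction j)
  case 0
  have "lev prec 1 = 0" by (subst lev.simps) simp
  then show ?case by (simp add: dyck_def)
next
  case (Suc j)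
  let ?xs = "qword n prec (Suc j)"
  let ?L = "lev prec (Suc (Suc j))"
  let ?c = "Ccount n prec (Suc (Suc j))"
  have IH: "dyck ?xs" "mset ?xs = mset (map (lev prec) [1..<Suc (Suc j)])" using Suc by (auto simp del: lev.simps)
  have h: "(?L = 0 \<and> ?c = 0) \<or> (0 < ?L \<and> 1 \<le> ?c \<and> ?c \<le> count (mset ?xs) (?L - 1))"
  proof (cases "?L = 0")
    case True then show ?thesis unfolding Ccount_def by simp
  next
    case False
    then have "1 \<le> ?c" using Ccount_pos[OF assms] by simp
    moreover have "?c \<le> count (mset ?xs) (?L - 1)"
      using Ccount_le[OF assms, of "Suc (Suc j)"] IH(2) count_map[of "lev prec" "Suc (Suc j)" "?L - 1"] by (simp del: lev.simps)
    ultimately show ?thesis using False by simp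
  qed
  have "qword n prec (Suc (Suc j)) = insert_step ?xs ?L ?c" by (rule qword.simps(3))
  then show ?case using ins_dyck[OF IH(1) h] IH(2) by (simp del: lev.simps)
qed

theorem mainTheorem4:
  fixes n :: nat and prec :: "nat \<Rightarrow> nat \<Rightarrow> bool"
  assumes "n \<ge> 1" and "unit_interval_order n prec"
  shows "length (q_of n prec) = n \<and> q_of n prec ! 0 = 0 \<and>
         (\<forall>i. 1 \<le> i \<and> i < n \<longrightarrow> q_of n prec ! i \<le> q_of n prec ! (i - 1) + 1)"
proof -
  obtain j where j: "n = Suc j" using assms(1) by (cases n) auto
  have I: "dyck (qword n prec n) \<and> mset (qword n prec n) = mset (map (lev prec) [1..<Suc n])"
    using inv[OF assms(2), of j] j by simp
  then have "length (qword n prec n) = n" by (metis length_map length_upt size_mset diff_Suc_1)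
  then show ?thesis using I unfolding q_of_def dyck_def by auto
qed

end
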